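(* Let $\mathbb X,\mathbb Y$ be bounded $\ell$-connected domains, $h\in\mathfrak D(\mathbb X,\mathbb Y)$, and $w\in\partial\mathbb Y$. If $h^{-1}(w)$ intersects a domain $\Omega$ compactly contained in $\mathbb X$, then $h^{-1}(w)$ also intersects $\partial\Omega$.
   Context: A bounded $\ell$-connected domain ($1\le \ell<\infty$) is a bounded domain in $\mathbb C$ whose boundary consists of $\ell$ disjoint continua. Denote the boundary components of $\mathbb X$ by $\mathfrak X_1,\dots,\mathfrak X_\ell$ and those of $\mathbb Y$ by $\Upsilon_1,\dots,\Upsilon_\ell$. A sequence of maps $h_k:\mathbb X\to\mathbb Y$ converges $cd$-uniformly to $h:\mathbb X\to\mathbb R^2$ if $h_k\to h$ uniformly on compact subsets of $\mathbb X$ and $\operatorname{dist}(h_k(x),\partial\mathbb Y)\to\operatorname{dist}(h(x),\partial\mathbb Y)$ uniformly in $x\in\mathbb X$. $\mathscr H_{cd}(\mathbb X,\mathbb Y)$ denotes the class of $cd$-limits of homeomorphisms $h_k$ of $\mathbb X$ onto $\mathbb Y$ satisfying the (fixed) boundary correspondence $h_k(x)\to\Upsilon_\nu$ as $x\to\mathfrak X_\nu$, $\nu=1,\dots,\ell$. A deformation is a map $h\in\mathscr H_{cd}(\mathbb X,\mathbb Y)$ with $h\in\mathscr W^{1,2}(\mathbb X,\mathbb R^2)$, Jacobian $J_h=|h_z|^2-|h_{\bar z}|^2\ge0$ a.e., and $\iint_{\mathbb X}J_h\le|\mathbb Y|$; the class of deformations is $\mathfrak D(\mathbb X,\mathbb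 Y)$. *)

theory Defs
  imports "HOL-Analysis.Analysis"
begin

(* The plane R^2 is identified with the type complex. *)

(* X is a bounded domain whose boundary consists of exactly l disjoint continua,
   namely the connected components of its frontier, labelled bijectively by
   Bd 1, ..., Bd l. *)
definition l_connected_domain :: "complex set \<Rightarrow> nat \<Rightarrow> (nat \<Rightarrow> complex set) \<Rightarrow> bool" where
  "l_connected_domain X l Bd \<longleftrightarrow>
     open X \<and> connected X \<and> X \<noteq> {} \<and> bounded X \<and> 1 \<le> l \<and>
     components (frontier X) = Bd ` {1..l} \<and> inj_on Bd {1..l} \<and>
     (\<forall>\<nu>\<in>{1..l}. compact (Bd \<nu>) \<and> connected (Bd \<nu>) \<and> Bd \<nu> \<noteq> {})"

(* f(x) \<rightarrow> Upsilon_nu as x \<rightarrow> Xfrak_nu, for every nu *)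
definition boundary_corresp ::
  "complex set \<Rightarrow> nat \<Rightarrow> (nat \<Rightarrow> complex set) \<Rightarrow> (nat \<Rightarrow> complex set) \<Rightarrow> (complex \<Rightarrow> complex) \<Rightarrow> bool" where
  "boundary_corresp X l BX BY f \<longleftrightarrow>
     (\<forall>\<nu>\<in>{1..l}. \<forall>\<epsilon>>0. \<exists>\<delta>>0. \<forall>x\<in>X.
         infdist x (BX \<nu>) < \<delta> \<longrightarrow> infdist (f x) (BY \<nu>) < \<epsilon>)"

definition cd_converges ::
  "complex set \<Rightarrow> complex set \<Rightarrow> (nat \<Rightarrow> complex \<Rightarrow> complex) \<Rightarrow> (complex \<Rightarrow> complex) \<Rightarrow> bool" where
  "cd_converges X Y hk h \<longleftrightarrow>
     (\<forall>K. compact K \<and> K \<subseteq> X \<longrightarrow> uniform_limit K hk h sequentially) \<and>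
     uniform_limit X (\<lambda>k x. infdist (hk k x) (frontier Y)) (\<lambda>x. infdist (h x) (frontier Y)) sequentially"

definition H_cd ::
  "complex set \<Rightarrow> complex set \<Rightarrow> nat \<Rightarrow> (nat \<Rightarrow> complex set) \<Rightarrow> (nat \<Rightarrow> complex set) \<Rightarrow> (complex \<Rightarrow> complex) set" where
  "H_cd X Y l BX BY = {h. \<exists>hk :: nat \<Rightarrow> complex \<Rightarrow> complex.
       (\<forall>k. (\<exists>g. homeomorphism X Y (hk k) g) \<and> boundary_corresp X l BX BY (hk k)) \<and>
       cd_converges X Y hk h}"

fun Ck :: "nat \<Rightarrow> (complex \<Rightarrow> real) set" where
  "Ck 0 = {f. continuous_on UNIV f}"
| "Ck (Suc k) = {f. (\<forall>x. f differentiable (at x)) \<and>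
                    (\<lambda>x. frechet_derivative f (at x) 1) \<in> Ck k \<and>
                    (\<lambda>x. frechet_derivative f (at x) \<i>) \<in> Ck k}"

definition smooth_fun :: "(complex \<Rightarrow> real) \<Rightarrow> bool" where
  "smooth_fun f \<longleftrightarrow> (\<forall>k. f \<in> Ck k)"

definition test_fun :: "complex set \<Rightarrow> (complex \<Rightarrow> real) \<Rightarrow> bool" where
  "test_fun X \<phi> \<longleftrightarrow> smooth_fun \<phi> \<and> compact (closure {x. \<phi> x \<noteq> 0}) \<and>
                     closure {x. \<phi> x \<noteq> 0} \<subseteq> X"

definition L2_on :: "complex set \<Rightarrow> (complex \<Rightarrow> complex) \<Rightarrow> bool" where
  "L2_on X f \<longleftrightarrow> set_borel_measurable lborel X f \<and>
                  set_integrable lborel X (\<lambda>x. (norm (f x))\<^sup>2)"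

definition weak_partials_W12 ::
  "complex set \<Rightarrow> (complex \<Rightarrow> complex) \<Rightarrow> (complex \<Rightarrow> complex) \<Rightarrow> (complex \<Rightarrow> complex) \<Rightarrow> bool" where
  "weak_partials_W12 X h hx hy \<longleftrightarrow> L2_on X h \<and> L2_on X hx \<and> L2_on X hy \<and>
     (\<forall>\<phi>. test_fun X \<phi> \<longrightarrow>
        (LINT x:X|lborel. h x * of_real (frechet_derivative \<phi> (at x) 1)) =
          - (LINT x:X|lborel. hx x * of_real (\<phi> x)) \<and>
        (LINT x:X|lborel. h x * of_real (frechet_derivative \<phi> (at x) \<i>)) =
          - (LINT x:X|lborel. hy x * of_real (\<phi> x)))"

definition W12 :: "complex set \<Rightarrow> (complex \<Rightarrow> complex) \<Rightarrow> bool" where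
  "W12 X h \<longleftrightarrow> (\<exists>hx hy. weak_partials_W12 X h hx hy)"

(* Jacobian J_h = |h_z|^2 - |h_zbar|^2 with h_z = (h_x - i h_y)/2, h_zbar = (h_x + i h_y)/2 *)
definition jacobian_of :: "complex \<Rightarrow> complex \<Rightarrow> real" where
  "jacobian_of hx hy = (cmod ((hx - \<i> * hy) / 2))\<^sup>2 - (cmod ((hx + \<i> * hy) / 2))\<^sup>2"

definition deformations ::
  "complex set \<Rightarrow> complex set \<Rightarrow> nat \<Rightarrow> (nat \<Rightarrow> complex set) \<Rightarrow> (nat \<Rightarrow> complex set) \<Rightarrow> (complex \<Rightarrow> complex) set" where
  "deformations X Y l BX BY = {h. h \<in> H_cd X Y l BX BY \<and>
     (\<exists>hx hy. weak_partials_W12 X h hx hy \<and>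
        (AE x in lborel. x \<in> X \<longrightarrow> jacobian_of (hx x) (hy x) \<ge> 0) \<and>
        (LINT x:X|lborel. jacobian_of (hx x) (hy x)) \<le> measure lborel Y)}"

end

theory Submission
  imports Defs
begin

theorem mainTheorem17:
  fixes X Y \<Omega> :: "complex set" and l :: nat and BX BY :: "nat \<Rightarrow> complex set"
    and h :: "complex \<Rightarrow> complex" and w :: complex
  assumes "l_connected_domain X l BX"
    and "l_connected_domain Y l BY"
    and "h \<in> deformations X Y l BX BY"
    and "w \<in> frontier Y"
    and "open \<Omega>" and "connected \<Omega>"
    and "compact (closure \<Omega>)" and "closure \<Omega> \<subseteq> X"
    and "{x \<in> X. h x = w} \<inter> \<Omega> \<noteq> {}"
  shows "{x \<in> X. h x = w} \<inter> frontier \<Omega> \<noteq> {}"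
proof (rule ccontr)
  assume nf: "\<not> ?thesis"
  have oY: "open Y" using assms(2) unfolding l_connected_domain_def by auto
  obtain hk where hom: "\<And>k. \<exists>g. homeomorphism X Y (hk k) g"
    and cd: "cd_converges X Y hk h"
    using assms(3) unfolding deformations_def H_cd_def by auto
  have ul: "uniform_limit (closure \<Omega>) hk h sequentially"
    using cd assms(7,8) unfolding cd_converges_def by auto
  have contk: "continuous_on (closure \<Omega>) (hk k)" for k
  proof -
    obtain g where "homeomorphism X Y (hk k) g" using hom by blast
    then have "continuous_on X (hk k)" by (simp add: homeomorphism_def)
    then show ?thesis using assms(8) continuous_on_subset by blast
  qed
  have conth: "continuous_on (closure \<Omega>) h"
    by (rule uniform_limit_theorem[OF _ ul]) (auto simp: contk)
  have fsub: "frontier \<Omega> \<subseteq> closure \<Omega>" by (simp add: frontier_def)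
  have cf: "compact (h ` frontier \<Omega>)"
  proof (rule compact_continuous_image)
    show "continuous_on (frontier \<Omega>) h" using continuous_on_subset[OF conth fsub] .
    show "compact (frontier \<Omega>)"
      using compact_Int_closed[OF assms(7) frontier_closed[of \<Omega>]] fsub
      by (simp add: Int_absorb1)
  qed
  have wn: "w \<notin> h ` frontier \<Omega>"
    using nf fsub assms(8) by blast
  obtain d where d: "d > 0" "\<And>y. y \<in> h ` frontier \<Omega> \<Longrightarrow> d \<le> dist w y"
    using separate_point_closed[OF compact_imp_closed[OF cf] wn] by blast
  have ev: "\<forall>\<^sub>F k in sequentially. \<forall>x\<in>closure \<Omega>. dist (hk k x) (h x) < d/4"
    using uniform_limitD[OF ul, of "d/4"] d(1) by simp
  obtain N where "\<And>k. k \<ge> N \<Longrightarrow> \<forall>x\<in>closure \<Omega>. dist (hk k x) (h x) < d/4"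
    using ev unfolding eventually_sequentially by blast
  then have k: "\<And>x. x \<in> closure \<Omega> \<Longrightarrow> dist (hk N x) (h x) < d/4" by blast
  define k where "k = N"
  note k = k[folded k_def]
  obtain g where hkg: "homeomorphism X Y (hk k) g" using hom by blast
  obtain x0 where x0: "x0 \<in> \<Omega>" "x0 \<in> X" "h x0 = w" using assms(9) by auto
  define p where "p = hk k x0"
  have pw: "dist p w < d/4" using k[of x0] x0 closure_subset unfolding p_def by auto
  have "w \<in> closure (- Y)" using assms(4) by (simp add: frontier_closures)
  then obtain z where z: "z \<in> - Y" "dist z w < d/4"
  proof -
    have "d/4 > 0" using d(1) by simp
    then show ?thesis using that \<open>w \<in> closure (- Y)\<close> closure_approachable by blast
  qed
  define T where "T = hk k ` \<Omega>"
  have OX: "\<Omega> \<subseteq> X" using assms(8) closure_subset by blast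
  have TY: "T \<subseteq> Y"
    using homeomorphism_image1[OF hkg] OX unfolding T_def by blast
  have "openin (top_of_set X) \<Omega>"
    using assms(1) assms(5) OX unfolding l_connected_domain_def by (simp add: open_openin_trans)
  then have "openin (top_of_set Y) T"
    unfolding T_def by (rule homeomorphism_imp_open_map[OF hkg])
  then have oT: "open T" using oY openin_open_trans by blast
  have cX: "continuous_on (closure \<Omega>) (hk k)" by (rule contk)
  have "compact (hk k ` closure \<Omega>)" using compact_continuous_image[OF cX assms(7)] .
  then have clo: "closed (hk k ` closure \<Omega>)" by (rule compact_imp_closed)
  have "T \<subseteq> hk k ` closure \<Omega>" unfolding T_def using closure_subset by (rule image_mono)
  then have cT: "closure T \<subseteq> hk k ` closure \<Omega>" using clo by (rule closure_minimal)
  have frT: "frontier T \<subseteq> hk k ` frontier \<Omega>"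
  proof
    fix q assume q: "q \<in> frontier T"
    then have "q \<in> closure T" "q \<notin> T" using oT by (simp_all add: frontier_def interior_open)
    then obtain y where y: "y \<in> closure \<Omega>" "q = hk k y"
      using cT by blast
    then have "y \<notin> \<Omega>" using \<open>q \<notin> T\<close> unfolding T_def by blast
    then have "y \<in> frontier \<Omega>" using y(1) assms(5) by (simp add: frontier_def interior_open)
    then show "q \<in> hk k ` frontier \<Omega>" using y(2) by blast
  qed
  have "closed_segment p z \<subseteq> ball w (d/4)"
    by (rule closed_segment_subset) (use pw z in \<open>auto simp: dist_commute\<close>)
  moreover have "closed_segment p z \<inter> T \<noteq> {}" using x0 unfolding p_def T_def by auto
  moreover have "closed_segment p z - T \<noteq> {}" using z TY by auto
  ultimately obtain q where q: "q \<in> ball w (d/4)" "q \<in> frontier T"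
    using connected_Int_frontier[of "closed_segment p z" T] by blast
  then obtain y where y: "y \<in> frontier \<Omega>" "q = hk k y" using frT by auto
  have "d \<le> dist w (h y)" using d(2) y by auto
  moreover have "dist (hk k y) (h y) < d/4" using k y fsub by auto
  moreover have "dist w (hk k y) < d/4" using q y by auto
  moreover have "dist w (h y) \<le> dist w (hk k y) + dist (hk k y) (h y)" by (rule dist_triangle)
  ultimately show False using d(1) by linarith
qed

end
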